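(* Let $n\in\mathbb{Z}$ and let $A$ be a $3\times 3$ matrix with integer entries. Then $A$ is a Cappell–Shaneson matrix with trace $n$ if and only if $f_n(A)=O$, where $f_n(x)=x^3-nx^2+(n-1)x-1$ and $O$ is the $3\times 3$ zero matrix.
   Context: A Cappell–Shaneson (CS) matrix is a matrix $A\in SL(3;\mathbb{Z})$ with $\det(A-I)=1$. The polynomial $f_n(x)=x^3-nx^2+(n-1)x-1$ is irreducible over $\mathbb{Q}$ for every integer $n$; this is a known fact that may be used. *)

theory Defs
  imports "HOL-Analysis.Analysis"
begin

definition CS_matrix :: "int^3^3 \<Rightarrow> bool" where
  "CS_matrix A \<longleftrightarrow> det A = 1 \<and> det (A - mat 1) = 1"

definition f_mat :: "int \<Rightarrow> int^3^3 \<Rightarrow> int^3^3" where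
  "f_mat n A = A ** A ** A - mat n ** (A ** A) + mat (n - 1) ** A - mat 1"

end

theory Submission
  imports Defs
begin

lemma mat_mul_nth: "(mat k ** (A::'a::comm_ring_1^'n^'n)) $ i $ j = k * A $ i $ j"
  by (simp add: matrix_matrix_mult_def mat_def if_distrib if_distribR cong: if_cong)

lemma mul_mat_left: "(A::'a::comm_ring_1^'n^'n) ** mat k = mat k ** A"
  by (simp add: vec_eq_iff mat_mul_nth) (simp add: matrix_matrix_mult_def mat_def if_distrib if_distribR mult_ac cong: if_cong)

lemma mul_mat_right: "(A::'a::comm_ring_1^'n^'n) ** (mat k ** B) = mat k ** (A ** B)"
  by (metis matrix_mul_assoc mul_mat_left)

lemma mul_mat_assoc: "(mat k ** (A::'a::comm_ring_1^'n^'n)) ** B = mat k ** (A ** B)"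
  by (metis matrix_mul_assoc)

lemma mat_mat: "mat k ** (mat l ** (A::'a::comm_ring_1^'n^'n)) = mat (k*l) ** A"
  by (simp add: vec_eq_iff mat_mul_nth)

lemma mat_mat1: "mat k ** (mat l::'a::comm_ring_1^'n^'n) = mat (k*l)"
  by (metis mat_mat matrix_mul_rid)

lemma mul_add_left: "((A::'a::comm_ring_1^'n^'n) + B) ** C = A ** C + B ** C"
  by (vector matrix_matrix_mult_def sum.distrib[symmetric] field_simps)

lemma mul_diff_left: "((A::'a::comm_ring_1^'n^'n) - B) ** C = A ** C - B ** C"
  by (vector matrix_matrix_mult_def sum_subtractf[symmetric] field_simps)

lemma mul_diff_right: "(A::'a::comm_ring_1^'n^'n) ** (B - C) = A ** B - A ** C"
  by (vector matrix_matrix_mult_def sum_subtractf[symmetric] field_simps)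

lemma key_identity:
  fixes X :: "int^'n^'n" and a b e n :: int
  defines "s \<equiv> n*a + b"
  defines "U \<equiv> b^2 - a*e + n*a*b + a^2*(n-1)"
  defines "V \<equiv> b*e + n*a*e - a^2"
  shows "mat (a^2) ** (X ** X ** X - mat n ** (X ** X) + mat (n - 1) ** X - mat 1)
     = (mat a ** X - mat s) ** (mat a ** (X ** X) + mat b ** X + mat e) + mat U ** X + mat V"
proof -
  have x3: "X ** (X ** X) = X ** X ** X" by (rule matrix_mul_assoc)
  show ?thesis
  apply (simp only: mul_mat_right[of X] mul_mat_left[of X] mul_mat_assoc mat_mat mat_mat1 matrix_add_ldistrib mul_add_left
      mul_diff_left mul_diff_right x3)
  apply (simp only: vec_eq_iff mat_mul_nth vector_add_component vector_minus_component)
  apply (intro allI)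
  subgoal for i j
  apply (simp only: mat_def vec_lambda_beta s_def U_def V_def)
  apply (cases "i = j")
   apply (simp only: if_True if_False, simp add: algebra_simps power2_eq_square)
  apply (simp only: if_True if_False, simp add: algebra_simps power2_eq_square)
  done
  done
qed


definition c2 :: "int^3^3 \<Rightarrow> int" where
  "c2 A = A$1$1*A$2$2 - A$1$2*A$2$1 + A$1$1*A$3$3 - A$1$3*A$3$1 + A$2$2*A$3$3 - A$2$3*A$3$2"

lemma CH3: "(A::int^3^3) ** A ** A = mat (trace A) ** (A ** A) - mat (c2 A) ** A + mat (det A)"
  apply (simp only: vec_eq_iff forall_3 vector_add_component vector_minus_component mat_mul_nth)
  apply (simp add: matrix_matrix_mult_def sum_3 trace_def c2_def det_3 mat_def)
  apply (simp add: algebra_simps)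
  done

lemma det_minus: "det ((A::int^3^3) - mat 1) = det A - c2 A + trace A - 1"
  apply (simp add: det_3 c2_def trace_def sum_3 mat_def)
  apply (simp add: algebra_simps)
  done

lemma noroot:
  fixes s a n :: int
  assumes "s^3 - n * s^2*a + (n-1) * s * a^2 - a^3 = 0"
  shows "a = 0"
proof (rule ccontr)
  assume a0: "a \<noteq> 0"
  define g where "g = gcd s a"
  have gne: "gcd s a \<noteq> 0" using a0 by simp
  obtain s' a' where h: "s = s' * gcd s a \<and> a = a' * gcd s a \<and> coprime s' a'"
    using gcd_coprime_exists[OF gne] by blast
  have sa: "s = s' * g" "a = a' * g" unfolding g_def
    by (rule conjunct1[OF h], rule conjunct1[OF conjunct2[OF h]])
  have cop: "coprime s' a'" by (rule conjunct2[OF conjunct2[OF h]])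
  have g0: "g \<noteq> 0" using a0 g_def by simp
  have e: "s^3 - n * s^2*a + (n-1) * s * a^2 - a^3 = g^3 * (s'^3 - n * s'^2*a' + (n-1) * s' * a'^2 - a'^3)"
    unfolding sa by (simp add: algebra_simps power2_eq_square power3_eq_cube)
  have "g^3 * (s'^3 - n * s'^2*a' + (n-1) * s' * a'^2 - a'^3) = 0"
    using assms e by simp
  hence F: "s'^3 - n * s'^2*a' + (n-1) * s' * a'^2 - a'^3 = 0" using g0 by simp
  have "a' dvd s'^3"
  proof -
    have "s'^3 = a' * (n * s'^2 - (n-1) * s' * a' + a'^2)" using F by (simp add: algebra_simps power2_eq_square power3_eq_cube)
    thus ?thesis by simp
  qed
  moreover have "coprime a' (s'^3)" using cop by (simp add: coprime_commute)
  ultimately have "\<bar>a'\<bar> = 1" using coprime_common_divisor_int[of a' "s'^3" a'] by simp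
  hence a1: "a' = 1 \<or> a' = -1" by linarith
  have "s' dvd a'^3"
  proof -
    have "a'^3 = s' * (s'^2 - n * s' * a' + (n-1)*a'^2)" using F by (simp add: algebra_simps power2_eq_square power3_eq_cube)
    thus ?thesis by simp
  qed
  moreover have "coprime s' (a'^3)" using cop by simp
  ultimately have "\<bar>s'\<bar> = 1" using coprime_common_divisor_int[of s' "a'^3" s'] by simp
  hence s1: "s' = 1 \<or> s' = -1" by linarith
  show False
    using a1 s1 F
    apply (elim disjE)
       apply simp_all
     apply presburger
    apply presburger
    done
qed

lemma scalar3:
  fixes X :: "int^3^3"
  assumes "u \<noteq> 0" "mat u ** X + mat v = 0"
  shows "X = mat (X$1$1)"
proof -
  have e: "u * X$i$j + (if i = j then v else 0) = 0" for i j
    using arg_cong[OF assms(2), of "\<lambda>M. M$i$j"]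
    by (simp only: vector_add_component mat_mul_nth zero_index) (simp add: mat_def)
  show ?thesis
  proof (simp only: vec_eq_iff, intro allI)
    fix i j :: 3
    show "X$i$j = mat (X$1$1) $ i $ j"
    proof (cases "i = j")
      case True
      have "u * X$i$i = u * X$1$1" proof -
        have "u*X$i$i + v = 0" "u*X$1$1+v=0" using e[of i i] e[of 1 1] by simp_all
        thus ?thesis by linarith
      qed
      hence "X$i$i = X$1$1" using assms(1) by simp
      thus ?thesis using True assms(1) by (simp add: mat_def)
    next
      case False
      thus ?thesis using e[of i j] assms(1) by (simp add: mat_def)
    qed
  qed
qed

lemma f_scalar:
  "(X::int^3^3) ** X ** X - mat n ** (X ** X) + mat (n - 1) ** X - mat 1 = 0 \<Longrightarrow> X \<noteq> mat l"
proof
  assume h: "X ** X ** X - mat n ** (X ** X) + mat (n - 1) ** X - mat 1 = 0" and x: "X = mat l"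
  have "mat (l^3 - n*l^2 + (n-1)*l - 1) = (0::int^3^3)"
    using h unfolding x
    apply (simp only: mat_mat1 mat_mat matrix_mul_rid)
    apply (simp add: vec_eq_iff mat_def power2_eq_square power3_eq_cube algebra_simps)
    apply (drule spec[of _ 1], drule spec[of _ 1])
    apply simp
    done
  hence "(mat (l^3 - n*l^2 + (n-1)*l - 1) :: int^3^3) $ 1 $ 1 = (0::int^3^3) $ 1 $ 1" by (rule arg_cong)
  hence "l^3 - n*l^2 + (n-1)*l - 1 = 0" by (simp add: mat_def)
  hence "l^3 - n*l^2*1 + (n-1)*l*1^2 - 1^3 = 0" by simp
  from noroot[OF this] show False by simp
qed


lemma mat_zero_eq: "(mat k :: int^3^3) = 0 \<Longrightarrow> k = 0"
proof -
  assume h: "(mat k :: int^3^3) = 0"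
  hence "(mat k :: int^3^3) $ 1 $ 1 = (0::int^3^3) $ 1 $ 1" by (rule arg_cong)
  thus "k = 0" by (simp add: mat_def)
qed

theorem mainTheorem1:
  fixes n :: int and A :: "int^3^3"
  shows "(CS_matrix A \<and> trace A = n) \<longleftrightarrow> f_mat n A = 0"
proof -
  define a where "a = trace A - n"
  define b where "b = n - 1 - c2 A"
  define e where "e = det A - 1"
  have P: "f_mat n A = mat a ** (A**A) + mat b ** A + mat e"
    unfolding f_mat_def
    apply (subst CH3)
    apply (simp only: vec_eq_iff vector_add_component vector_minus_component mat_mul_nth)
    apply (intro allI)
    subgoal for i j
    apply (simp only: mat_def vec_lambda_beta a_def b_def e_def)
    apply (cases "i = j")
     apply (simp only: if_True if_False, simp add: algebra_simps)
    apply (simp only: if_True if_False, simp add: algebra_simps)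
    done
    done
  have abe: "f_mat n A = 0 \<longleftrightarrow> a = 0 \<and> b = 0 \<and> e = 0"
  proof
    assume "a = 0 \<and> b = 0 \<and> e = 0" thus "f_mat n A = 0" using P by simp
  next
    assume f0: "f_mat n A = 0"
    hence P0: "mat a ** (A**A) + mat b ** A + mat e = 0" using P by simp
    have fA: "A ** A ** A - mat n ** (A ** A) + mat (n - 1) ** A - mat 1 = 0"
      using f0 unfolding f_mat_def .
    have a0: "a = 0"
    proof (rule ccontr)
      assume an: "a \<noteq> 0"
      define U where "U = b^2 - a*e + n*a*b + a^2*(n-1)"
      define V where "V = b*e + n*a*e - a^2"
      have "mat U ** A + mat V = 0"
        using key_identity[of a A n b e] fA P0 unfolding U_def V_def by simp
      note UV = this
      show False
      proof (cases "U = 0")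
        case False
        from scalar3[OF False UV] f_scalar[OF fA] show False by blast
      next
        case True
        hence "V = 0" using UV by (simp add: mat_zero_eq)
        moreover have "(n*a+b)^3 - n*(n*a+b)^2*a + (n-1)*(n*a+b) * a^2 - a^3 = U*(n*a+b) + V*a"
          unfolding U_def V_def by (simp add: algebra_simps power2_eq_square power3_eq_cube)
        ultimately have "(n*a+b)^3 - n*(n*a+b)^2*a + (n-1)*(n*a+b) * a^2 - a^3 = 0"
          using True by simp
        from noroot[OF this] an show False by simp
      qed
    qed
    hence P1: "mat b ** A + mat e = 0" using P0 by simp
    have b0: "b = 0"
    proof (rule ccontr)
      assume "b \<noteq> 0"
      from scalar3[OF this P1] f_scalar[OF fA] show False by blast
    qed
    hence "e = 0" using P1 by (simp add: mat_zero_eq)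
    thus "a = 0 \<and> b = 0 \<and> e = 0" using a0 b0 by simp
  qed
  show ?thesis
    unfolding abe CS_matrix_def det_minus a_def b_def e_def by auto
qed

end
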